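(* Let $A$ be a bounded linear operator on a complex Hilbert space $\mathcal{H}$, and let $N(A)$ denote the set of all bounded normal operators $M$ on $\mathcal{H}$ with $AM = MA$. Then \[ \|A^*A - AA^*\| \le \inf_{M \in N(A)} \|A + M\|^2 . \]
   Context: $A^*A - AA^*$ is called the self-commutator of $A$ and is denoted $C(A)$. *)

theory Defs
  imports "HOL-Analysis.Analysis"
begin

text \<open>A complex Hilbert space is modelled as a real Hilbert space
  (type of class real_inner and complete_space) together with an orthogonal
  complex structure J (multiplication by the imaginary unit).
  The complex inner product is then  inner x y + i * inner x (J y)
  (its real part is the real inner product), and scalar multiplication
  by a + i b is  x \<mapsto> a x + b J x.\<close>

definition complex_structure :: "('a::real_inner \<Rightarrow> 'a) \<Rightarrow> bool" where
  "complex_structure J \<longleftrightarrow> linear J \<and> (\<forall>x. J (J x) = - x) \<and>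
     (\<forall>x y. inner (J x) (J y) = inner x y)"

definition bounded_clinear_op :: "('a::real_inner \<Rightarrow> 'a) \<Rightarrow> ('a \<Rightarrow> 'a) \<Rightarrow> bool" where
  "bounded_clinear_op J A \<longleftrightarrow> bounded_linear A \<and> (\<forall>x. A (J x) = J (A x))"

text \<open>Hilbert-space adjoint (for complex-linear operators the adjoint with
  respect to the real part of the complex inner product coincides with the
  complex adjoint).\<close>
definition hadjoint :: "('a::real_inner \<Rightarrow> 'a) \<Rightarrow> ('a \<Rightarrow> 'a)" where
  "hadjoint A = (THE B. \<forall>x y. inner (A x) y = inner x (B y))"

definition normal_op :: "('a::real_inner \<Rightarrow> 'a) \<Rightarrow> ('a \<Rightarrow> 'a) \<Rightarrow> bool" where
  "normal_op J M \<longleftrightarrow> bounded_clinear_op J M \<and> hadjoint M \<circ> M = M \<circ> hadjoint M"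

definition self_commutator :: "('a::real_inner \<Rightarrow> 'a) \<Rightarrow> ('a \<Rightarrow> 'a)" where
  "self_commutator A = (\<lambda>x. hadjoint A (A x) - A (hadjoint A x))"

definition normal_commutant :: "('a::real_inner \<Rightarrow> 'a) \<Rightarrow> ('a \<Rightarrow> 'a) \<Rightarrow> ('a \<Rightarrow> 'a) set" where
  "normal_commutant J A = {M. normal_op J M \<and> A \<circ> M = M \<circ> A}"

end

theory Submission
  imports Defs "HOL-Complex_Analysis.Cauchy_Integral_Formula"
begin

typedef (overloaded) 'a U = "UNIV :: (('a::real_normed_vector \<Rightarrow>\<^sub>L 'a) \<times> real) set" by simp

definition mk :: "('a::real_normed_vector \<Rightarrow>\<^sub>L 'a) \<Rightarrow> real \<Rightarrow> 'a U" where "mk X c = Abs_U (X, c)"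
definition opp :: "'a::real_normed_vector U \<Rightarrow> ('a \<Rightarrow>\<^sub>L 'a)" where "opp u = fst (Rep_U u)"
definition scl :: "'a::real_normed_vector U \<Rightarrow> real" where "scl u = snd (Rep_U u)"

lemma opp_mk[simp]: "opp (mk X c) = X" by (simp add: opp_def mk_def Abs_U_inverse)
lemma scl_mk[simp]: "scl (mk X c) = c" by (simp add: scl_def mk_def Abs_U_inverse)
lemma U_eq: "u = v \<longleftrightarrow> opp u = opp v \<and> scl u = scl v"
  by (metis Rep_U_inject opp_def prod.expand scl_def)
lemma blinfun_eq_iff: "x = y \<longleftrightarrow> (\<forall>i. blinfun_apply x i = blinfun_apply y i)"
  using blinfun_eqI by auto
lemma mk_opp_scl[simp]: "mk (opp u) (scl u) = u" by (simp add: U_eq)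

instantiation U :: (real_normed_vector) real_normed_algebra_1
begin
definition "0 = mk 0 0"
definition "1 = mk 0 1"
definition "u + v = mk (opp u + opp v) (scl u + scl v)"
definition "u - v = mk (opp u - opp v) (scl u - scl v)"
definition "- u = mk (- opp u) (- scl u)"
definition "scaleR r u = mk (r *\<^sub>R opp u) (r * scl u)"
definition "u * v = mk ((opp u o\<^sub>L opp v) + scl u *\<^sub>R opp v + scl v *\<^sub>R opp u) (scl u * scl v)"
definition "norm u = norm (opp u) + \<bar>scl u\<bar>"
definition "sgn (u::'a U) = inverse (norm u) *\<^sub>R u"
definition "dist (u::'a U) v = norm (u - v)"
definition "(uniformity :: ('a U \<times> 'a U) filter) = (INF e\<in>{0 <..}. principal {(x, y). dist x y < e})"
definition "open (S :: 'a U set) = (\<forall>x\<in>S. \<forall>\<^sub>F (x', y) in uniformity. x' = x \<longrightarrow> y \<in> S)"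
instance
proof
  fix a b c :: "'a U" and r s :: real
  show "a + b + c = a + (b + c)" by (simp add: U_eq plus_U_def algebra_simps)
  show "a + b = b + a" by (simp add: U_eq plus_U_def algebra_simps)
  show "0 + a = a" by (simp add: U_eq plus_U_def zero_U_def)
  show "- a + a = 0" by (simp add: U_eq plus_U_def zero_U_def uminus_U_def)
  show "a - b = a + - b" by (simp add: U_eq plus_U_def minus_U_def uminus_U_def)
  show "r *\<^sub>R (a + b) = r *\<^sub>R a + r *\<^sub>R b" by (simp add: U_eq plus_U_def scaleR_U_def algebra_simps)
  show "(r + s) *\<^sub>R a = r *\<^sub>R a + s *\<^sub>R a" by (simp add: U_eq plus_U_def scaleR_U_def algebra_simps)
  show "r *\<^sub>R s *\<^sub>R a = (r * s) *\<^sub>R a" by (simp add: U_eq scaleR_U_def algebra_simps)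
  show "1 *\<^sub>R a = a" by (simp add: U_eq scaleR_U_def algebra_simps)
  show "a * b * c = a * (b * c)"
    unfolding U_eq times_U_def opp_mk scl_mk
    by (auto intro!: blinfun_eqI simp: blinfun.bilinear_simps scaleR_add_right mult.commute mult.left_commute)
  show "(a + b) * c = a * c + b * c"
    unfolding U_eq times_U_def plus_U_def opp_mk scl_mk
    by (auto intro!: blinfun_eqI simp: blinfun.bilinear_simps scaleR_add_right scaleR_add_left distrib_right)
  show "a * (b + c) = a * b + a * c"
    unfolding U_eq times_U_def plus_U_def opp_mk scl_mk
    by (auto intro!: blinfun_eqI simp: blinfun.bilinear_simps scaleR_add_right scaleR_add_left distrib_left)
  show "r *\<^sub>R a * b = r *\<^sub>R (a * b)"
    unfolding U_eq times_U_def scaleR_U_def opp_mk scl_mk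
    by (auto intro!: blinfun_eqI simp: blinfun.bilinear_simps scaleR_add_right)
  show "a * r *\<^sub>R b = r *\<^sub>R (a * b)"
    unfolding U_eq times_U_def scaleR_U_def opp_mk scl_mk
    by (auto intro!: blinfun_eqI simp: blinfun.bilinear_simps scaleR_add_right mult.commute mult.left_commute)
  show "1 * a = a" by (simp add: U_eq times_U_def one_U_def)
  show "a * 1 = a" by (simp add: U_eq times_U_def one_U_def)
  show "(0::'a U) \<noteq> 1" by (simp add: U_eq zero_U_def one_U_def)
  show "norm (1::'a U) = 1" by (simp add: norm_U_def one_U_def)
  show "dist a b = norm (a - b)" by (simp add: dist_U_def)
  show "sgn a = inverse (norm a) *\<^sub>R a" by (simp add: sgn_U_def)
  show "(uniformity :: ('a U \<times> 'a U) filter) = (INF e\<in>{0 <..}. principal {(x, y). dist x y < e})"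
    by (simp add: uniformity_U_def)
  show "\<And>S::'a U set. open S = (\<forall>x\<in>S. \<forall>\<^sub>F (x', y) in uniformity. x' = x \<longrightarrow> y \<in> S)"
    by (simp add: open_U_def)
  show "(norm a = 0) = (a = 0)"
    by (simp add: norm_U_def U_eq zero_U_def add_nonneg_eq_0_iff)
  show "norm (a + b) \<le> norm a + norm b"
    using norm_triangle_ineq[of "opp a" "opp b"] abs_triangle_ineq[of "scl a" "scl b"]
    by (simp add: norm_U_def plus_U_def)
  show "norm (r *\<^sub>R a) = \<bar>r\<bar> * norm a"
    by (simp add: norm_U_def scaleR_U_def abs_mult algebra_simps)
  show "norm (a * b) \<le> norm a * norm b"
  proof -
    have "norm ((opp a o\<^sub>L opp b) + scl a *\<^sub>R opp b + scl b *\<^sub>R opp a)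
       \<le> norm (opp a) * norm (opp b) + \<bar>scl a\<bar> * norm (opp b) + \<bar>scl b\<bar> * norm (opp a)"
      by (smt (verit) norm_blinfun_compose norm_scaleR norm_triangle_ineq)
    then show ?thesis
      by (simp add: norm_U_def times_U_def abs_mult algebra_simps)
  qed
qed
end


lemma opp_add[simp]: "opp (u + v) = opp u + opp v" by (simp add: plus_U_def)
lemma scl_add[simp]: "scl (u + v) = scl u + scl v" by (simp add: plus_U_def)
lemma opp_diff[simp]: "opp (u - v) = opp u - opp v" by (simp add: minus_U_def)
lemma scl_diff[simp]: "scl (u - v) = scl u - scl v" by (simp add: minus_U_def)
lemma opp_minus[simp]: "opp (- u) = - opp u" by (simp add: uminus_U_def)
lemma scl_minus[simp]: "scl (- u) = - scl u" by (simp add: uminus_U_def)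
lemma opp_scaleR[simp]: "opp (r *\<^sub>R u) = r *\<^sub>R opp u" by (simp add: scaleR_U_def)
lemma scl_scaleR[simp]: "scl (r *\<^sub>R u) = r * scl u" by (simp add: scaleR_U_def)
lemma opp_zero[simp]: "opp 0 = 0" by (simp add: zero_U_def)
lemma scl_zero[simp]: "scl 0 = 0" by (simp add: zero_U_def)
lemma opp_one[simp]: "opp 1 = 0" by (simp add: one_U_def)
lemma scl_one[simp]: "scl 1 = 1" by (simp add: one_U_def)
lemma opp_times: "opp (u * v) = (opp u o\<^sub>L opp v) + scl u *\<^sub>R opp v + scl v *\<^sub>R opp u" by (simp add: times_U_def)
lemma scl_times[simp]: "scl (u * v) = scl u * scl v" by (simp add: times_U_def)
lemma norm_U: "norm u = norm (opp u) + \<bar>scl u\<bar>" by (simp add: norm_U_def)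

lemma bl_opp: "bounded_linear opp"
  by (rule bounded_linear_intro[where K=1]) (auto simp: norm_U)
lemma bl_scl: "bounded_linear scl"
  by (rule bounded_linear_intro[where K=1]) (auto simp: norm_U)

lemma blinfun_complete:
  fixes X::"nat \<Rightarrow> 'a::real_normed_vector \<Rightarrow>\<^sub>L 'b::{real_normed_vector,complete_space}"
  assumes "Cauchy X"
  shows "convergent X"
proof -
  {
    fix x::'a
    {
      fix x::'a
      assume "norm x \<le> 1"
      have "Cauchy (\<lambda>n. X n x)"
      proof (rule CauchyI)
        fix e::real
        assume "0 < e"
        from CauchyD[OF \<open>Cauchy X\<close> \<open>0 < e\<close>] obtain M
          where M: "\<And>m n. m \<ge> M \<Longrightarrow> n \<ge> M \<Longrightarrow> norm (X m - X n) < e"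
          by auto
        show "\<exists>M. \<forall>m\<ge>M. \<forall>n\<ge>M. norm (X m x - X n x) < e"
        proof (safe intro!: exI[where x=M])
          fix m n
          assume le: "M \<le> m" "M \<le> n"
          have "norm (X m x - X n x) = norm ((X m - X n) x)"
            by (simp add: blinfun.bilinear_simps)
          also have "\<dots> \<le> norm (X m - X n) * norm x"
             by (rule norm_blinfun)
          also have "\<dots> \<le> norm (X m - X n) * 1"
            using \<open>norm x \<le> 1\<close> norm_ge_zero by (rule mult_left_mono)
          also have "\<dots> = norm (X m - X n)" by simp
          also have "\<dots> < e" using le by fact
          finally show "norm (X m x - X n x) < e" .
        qed
      qed
      hence "convergent (\<lambda>n. X n x)"
        by (metis Cauchy_convergent_iff)
    } note convergent_norm1 = this
    define y where "y = x /\<^sub>R norm x"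
    have y: "norm y \<le> 1" and xy: "x = norm x *\<^sub>R y"
      by (simp_all add: y_def inverse_eq_divide)
    have "convergent (\<lambda>n. norm x *\<^sub>R X n y)"
      by (intro bounded_bilinear.convergent[OF bounded_bilinear_scaleR] convergent_const
        convergent_norm1 y)
    also have "(\<lambda>n. norm x *\<^sub>R X n y) = (\<lambda>n. X n x)"
      by (subst xy) (simp add: blinfun.bilinear_simps)
    finally have "convergent (\<lambda>n. X n x)" .
  }
  then obtain v where v: "\<And>x. (\<lambda>n. X n x) \<longlonglongrightarrow> v x"
    unfolding convergent_def
    by metis

  have "Cauchy (\<lambda>n. norm (X n))"
  proof (rule CauchyI)
    fix e::real
    assume "e > 0"
    from CauchyD[OF \<open>Cauchy X\<close> \<open>0 < e\<close>] obtain M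
      where M: "\<And>m n. m \<ge> M \<Longrightarrow> n \<ge> M \<Longrightarrow> norm (X m - X n) < e"
      by auto
    show "\<exists>M. \<forall>m\<ge>M. \<forall>n\<ge>M. norm (norm (X m) - norm (X n)) < e"
    proof (safe intro!: exI[where x=M])
      fix m n assume mn: "m \<ge> M" "n \<ge> M"
      have "norm (norm (X m) - norm (X n)) \<le> norm (X m - X n)"
        by (metis norm_triangle_ineq3 real_norm_def)
      also have "\<dots> < e" using mn by fact
      finally show "norm (norm (X m) - norm (X n)) < e" .
    qed
  qed
  then obtain K where K: "(\<lambda>n. norm (X n)) \<longlonglongrightarrow> K"
    unfolding Cauchy_convergent_iff convergent_def
    by metis

  have "bounded_linear v"
  proof
    fix x y and r::real
    from tendsto_add[OF v[of x] v [of y]] v[of "x + y", unfolded blinfun.bilinear_simps]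
      tendsto_scaleR[OF tendsto_const[of r] v[of x]] v[of "r *\<^sub>R x", unfolded blinfun.bilinear_simps]
    show "v (x + y) = v x + v y" "v (r *\<^sub>R x) = r *\<^sub>R v x"
      by (metis (poly_guards_query) LIMSEQ_unique)+
    show "\<exists>K. \<forall>x. norm (v x) \<le> norm x * K"
    proof (safe intro!: exI[where x=K])
      fix x
      have "norm (v x) \<le> K * norm x"
        by (rule tendsto_le[OF _ tendsto_mult[OF K tendsto_const] tendsto_norm[OF v]])
          (auto simp: norm_blinfun)
      thus "norm (v x) \<le> norm x * K"
        by (simp add: ac_simps)
    qed
  qed
  hence Bv: "\<And>x. (\<lambda>n. X n x) \<longlonglongrightarrow> Blinfun v x"
    by (auto simp: bounded_linear_Blinfun_apply v)

  have "X \<longlonglongrightarrow> Blinfun v"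
  proof (rule LIMSEQ_I)
    fix r::real assume "r > 0"
    define r' where "r' = r / 2"
    have "0 < r'" "r' < r" using \<open>r > 0\<close> by (simp_all add: r'_def)
    from CauchyD[OF \<open>Cauchy X\<close> \<open>r' > 0\<close>]
    obtain M where M: "\<And>m n. m \<ge> M \<Longrightarrow> n \<ge> M \<Longrightarrow> norm (X m - X n) < r'"
      by metis
    show "\<exists>no. \<forall>n\<ge>no. norm (X n - Blinfun v) < r"
    proof (safe intro!: exI[where x=M])
      fix n assume n: "M \<le> n"
      have "norm (X n - Blinfun v) \<le> r'"
      proof (rule norm_blinfun_bound)
        fix x
        have "eventually (\<lambda>m. m \<ge> M) sequentially"
          by (metis eventually_ge_at_top)
        hence ev_le: "eventually (\<lambda>m. norm (X n x - X m x) \<le> r' * norm x) sequentially"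
        proof eventually_elim
          case (elim m)
          have "norm (X n x - X m x) = norm ((X n - X m) x)"
            by (simp add: blinfun.bilinear_simps)
          also have "\<dots> \<le> norm ((X n - X m)) * norm x"
            by (rule norm_blinfun)
          also have "\<dots> \<le> r' * norm x"
            using M[OF n elim] by (simp add: mult_right_mono)
          finally show ?case .
        qed
        have tendsto_v: "(\<lambda>m. norm (X n x - X m x)) \<longlonglongrightarrow> norm (X n x - Blinfun v x)"
          by (auto intro!: tendsto_intros Bv)
        show "norm ((X n - Blinfun v) x) \<le> r' * norm x"
          by (auto intro!: tendsto_upperbound tendsto_v ev_le simp: blinfun.bilinear_simps)
      qed (simp add: \<open>0 < r'\<close> less_imp_le)
      thus "norm (X n - Blinfun v) < r"
        by (metis \<open>r' < r\<close> le_less_trans)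
    qed
  qed
  thus "convergent X"
    by (rule convergentI)
qed

instance U :: ("{real_normed_vector,complete_space}") banach
proof
  fix u :: "nat \<Rightarrow> 'a U"
  assume C: "Cauchy u"
  have "Cauchy (\<lambda>n. opp (u n))" using bounded_linear.Cauchy[OF bl_opp C] .
  then obtain L where L: "(\<lambda>n. opp (u n)) \<longlonglongrightarrow> L" using blinfun_complete convergent_def by blast
  have "Cauchy (\<lambda>n. scl (u n))" using bounded_linear.Cauchy[OF bl_scl C] .
  then obtain c where c: "(\<lambda>n. scl (u n)) \<longlonglongrightarrow> c" using Cauchy_convergent_iff convergent_def by blast
  have "(\<lambda>n. norm (opp (u n) - L) + \<bar>scl (u n) - c\<bar>) \<longlonglongrightarrow> 0 + 0"
    apply (intro tendsto_add)
    using L c by (auto simp: tendsto_norm_zero_iff LIM_zero_iff tendsto_rabs_zero_iff)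
  then have "(\<lambda>n. norm (u n - mk L c)) \<longlonglongrightarrow> 0" by (simp add: norm_U)
  then have "u \<longlonglongrightarrow> mk L c" by (simp add: tendsto_norm_zero_iff LIM_zero_iff)
  then show "convergent u" by (auto simp: convergent_def)
qed


definition pU :: "'a::real_normed_vector U \<Rightarrow> ('a \<Rightarrow>\<^sub>L 'a)" where
  "pU u = opp u + scl u *\<^sub>R id_blinfun"
definition inj :: "('a::real_normed_vector \<Rightarrow>\<^sub>L 'a) \<Rightarrow> 'a U" where "inj X = mk X 0"

lemma pU_apply: "blinfun_apply (pU u) x = opp u x + scl u *\<^sub>R x"
  by (simp add: pU_def blinfun.bilinear_simps)
lemma pU_inj[simp]: "pU (inj X) = X" by (simp add: pU_def inj_def)
lemma pU_mult: "pU (u * v) = pU u o\<^sub>L pU v"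
  by (auto intro!: blinfun_eqI simp: pU_apply opp_times blinfun.bilinear_simps scaleR_add_right)
lemma pU_one[simp]: "pU 1 = id_blinfun" by (simp add: pU_def)
lemma pU_add: "pU (u + v) = pU u + pU v"
  by (auto intro!: blinfun_eqI simp: pU_apply blinfun.bilinear_simps scaleR_add_left)
lemma pU_diff: "pU (u - v) = pU u - pU v"
  by (auto intro!: blinfun_eqI simp: pU_apply blinfun.bilinear_simps scaleR_diff_left)
lemma pU_minus: "pU (- u) = - pU u"
  by (auto intro!: blinfun_eqI simp: pU_apply blinfun.bilinear_simps)
lemma pU_scaleR: "pU (r *\<^sub>R u) = r *\<^sub>R pU u"
  by (auto intro!: blinfun_eqI simp: pU_apply blinfun.bilinear_simps scaleR_add_right)
lemma norm_pU: "norm (pU u) \<le> norm u"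
proof -
  have "norm (pU u) \<le> norm (opp u) + norm (scl u *\<^sub>R (id_blinfun::'a\<Rightarrow>\<^sub>L'a))"
    unfolding pU_def by (rule norm_triangle_ineq)
  also have "\<dots> \<le> norm (opp u) + \<bar>scl u\<bar>"
    using norm_blinfun_id_le[where 'a='a] by (simp add: mult_left_le)
  finally show ?thesis by (simp add: norm_U)
qed
lemma bl_pU: "bounded_linear pU"
  by (rule bounded_linear_intro[where K=1]) (auto simp: pU_add pU_scaleR norm_pU)
lemma inj_mult: "inj X * inj Y = inj (X o\<^sub>L Y)" by (simp add: inj_def times_U_def)
lemma norm_inj: "norm (inj X) = norm X" by (simp add: inj_def norm_U)

lemma pow_comm:
  fixes x y :: "'b::monoid_mult"
  assumes "x * y = y * x" shows "x * y ^ n = y ^ n * x"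
proof (induction n)
  case 0 then show ?case by simp
next
  case (Suc n)
  have "x * y ^ Suc n = (x * y) * y ^ n" by (simp add: mult.assoc)
  also have "\<dots> = y * (x * y ^ n)" using assms by (simp add: mult.assoc)
  also have "\<dots> = y ^ Suc n * x" using Suc by (simp add: mult.assoc)
  finally show ?case .
qed

lemma exp_comm:
  fixes x y :: "'b::{real_normed_algebra_1,banach}"
  assumes "x * y = y * x" shows "x * exp y = exp y * x"
proof -
  have "(\<lambda>n. x * (y ^ n /\<^sub>R fact n)) sums (x * exp y)" by (intro sums_mult exp_converges)
  moreover have "(\<lambda>n. (y ^ n /\<^sub>R fact n) * x) sums (exp y * x)" by (intro sums_mult2 exp_converges)
  moreover have "(\<lambda>n. x * (y ^ n /\<^sub>R fact n)) = (\<lambda>n. (y ^ n /\<^sub>R fact n) * x)"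
    using pow_comm[OF assms] by (simp add: mult_scaleR_right mult_scaleR_left)
  ultimately show ?thesis using sums_unique2 by metis
qed

lemma exp_rem2:
  fixes z :: "'b::{real_normed_algebra_1,banach}"
  shows "norm (exp z - 1 - z) \<le> norm z ^ 2 * exp (norm z)"
proof -
  define f where "f n = z ^ n /\<^sub>R fact n" for n
  have S: "f sums exp z" unfolding f_def by (rule exp_converges)
  have S1: "(\<lambda>n. f (Suc n)) sums (exp z - 1)"
    using S by (subst sums_Suc_iff) (simp add: f_def)
  have S2: "(\<lambda>n. f (Suc (Suc n))) sums (exp z - 1 - z)"
    using S1 by (subst sums_Suc_iff[where f="\<lambda>n. f (Suc n)"]) (simp add: f_def)
  have B: "norm (f (Suc (Suc n))) \<le> norm z ^ 2 * (norm z ^ n /\<^sub>R fact n)" for n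
  proof -
    have "norm (f (Suc (Suc n))) = norm (z ^ Suc (Suc n)) / fact (Suc (Suc n))"
      unfolding f_def norm_scaleR by (simp add: divide_inverse del: fact_Suc power_Suc)
    also have "\<dots> \<le> norm z ^ Suc (Suc n) / fact (Suc (Suc n))"
      by (intro divide_right_mono norm_power_ineq) simp
    also have "\<dots> \<le> norm z ^ Suc (Suc n) / fact n"
    proof (intro divide_left_mono)
      show "fact n \<le> (fact (Suc (Suc n)) :: real)" by (intro fact_mono) auto
    qed auto
    also have "\<dots> = norm z ^ 2 * (norm z ^ n /\<^sub>R fact n)"
      by (simp add: power2_eq_square divide_inverse)
    finally show ?thesis .
  qed
  have SB: "(\<lambda>n. norm z ^ 2 * (norm z ^ n /\<^sub>R fact n)) sums (norm z ^ 2 * exp (norm z))"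
    by (intro sums_mult exp_converges)
  have sn: "summable (\<lambda>n. norm (f (Suc (Suc n))))"
    by (rule summable_comparison_test[OF _ sums_summable[OF SB]]) (use B in auto)
  have "norm (exp z - 1 - z) = norm (\<Sum>n. f (Suc (Suc n)))" using S2 sums_unique by metis
  also have "\<dots> \<le> (\<Sum>n. norm (f (Suc (Suc n))))" by (rule summable_norm[OF sn])
  also have "\<dots> \<le> (\<Sum>n. norm z ^ 2 * (norm z ^ n /\<^sub>R fact n))"
    by (rule suminf_le[OF B sn sums_summable[OF SB]])
  also have "\<dots> = norm z ^ 2 * exp (norm z)" using SB sums_unique by metis
  finally show ?thesis .
qed

lemma exp_rem1:
  fixes z :: "'b::{real_normed_algebra_1,banach}"
  shows "norm (exp z - 1) \<le> norm z + norm z ^ 2 * exp (norm z)"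
proof -
  have "norm (exp z - 1) \<le> norm z + norm (exp z - 1 - z)"
    using norm_triangle_ineq[of z "exp z - 1 - z"] by simp
  then show ?thesis using exp_rem2[of z] by linarith
qed

lemma inner_eq_all:
  fixes u v :: "'a::real_inner"
  assumes "\<And>x. inner x u = inner x v" shows "u = v"
proof -
  have "inner (u - v) (u - v) = 0" using assms[of "u - v"] by (simp add: inner_diff_right)
  then show ?thesis by simp
qed

lemma aux_quad:
  fixes s q :: real
  assumes h: "\<And>t. 2 * t * s \<le> t^2 * q" and q0: "q \<ge> 0"
  shows "s = 0"
proof -
  define u where "u = s / (q+1)"
  have qp: "q + 1 > 0" using q0 by simp
  have se: "s = u * (q+1)" using qp by (simp add: u_def)
  have "2 * u * (u * (q+1)) \<le> u^2 * q" using h[of u] se by simp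
  then have "u^2 * (q + 2) \<le> 0" by (simp add: power2_eq_square algebra_simps)
  then have "u^2 \<le> 0" using q0 by (simp add: mult_le_0_iff)
  then have "u = 0" by simp
  then show ?thesis using se by simp
qed

lemma parallelogram:
  fixes a b :: "'a::real_inner"
  shows "norm (a - b) ^ 2 + norm (a + b) ^ 2 = 2 * norm a ^ 2 + 2 * norm b ^ 2"
  by (simp add: power2_norm_eq_inner inner_add_left inner_add_right inner_diff_left inner_diff_right inner_commute)

lemma orth_proj_exists:
  fixes K :: "'a::{real_inner,complete_space} set"
  assumes sub: "subspace K" and cl: "closed K"
  shows "\<exists>p\<in>K. \<forall>k\<in>K. inner (x0 - p) k = 0"
proof -
  define D where "D = (\<lambda>k. norm (x0 - k) ^ 2) ` K"
  define d where "d = Inf D"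
  have K0: "0 \<in> K" using sub by (simp add: subspace_0)
  have bdd: "bdd_below D" unfolding D_def by (rule bdd_belowI[where m=0]) auto
  have ne: "D \<noteq> {}" using K0 unfolding D_def by auto
  have dle: "d \<le> norm (x0 - k) ^ 2" if "k \<in> K" for k
    unfolding d_def D_def using bdd that by (auto intro!: cInf_lower simp: D_def)
  have "\<exists>k\<in>K. norm (x0 - k) ^ 2 < d + 1 / (Suc n)" for n
  proof -
    have "Inf D < d + 1 / Suc n" by (simp add: d_def)
    then obtain t where "t \<in> D" "t < d + 1 / Suc n" using cInf_lessD[OF ne] by blast
    then show ?thesis unfolding D_def by auto
  qed
  then obtain k where kK: "\<And>n. k n \<in> K" and kd: "\<And>n. norm (x0 - k n) ^ 2 < d + 1 / Suc n"
    by metis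
  have mid: "norm (k n - k m) ^ 2 \<le> 2 / Suc n + 2 / Suc m" for n m
  proof -
    have "(1/2) *\<^sub>R (k n + k m) \<in> K" using kK sub by (simp add: subspace_add subspace_mul)
    then have h: "d \<le> norm (x0 - (1/2) *\<^sub>R (k n + k m)) ^ 2" by (rule dle)
    have e: "x0 - k n + (x0 - k m) = 2 *\<^sub>R (x0 - (1/2) *\<^sub>R (k n + k m))"
      by (simp add: algebra_simps scaleR_2)
    have "norm (x0 - k n + (x0 - k m)) ^ 2 = 4 * norm (x0 - (1/2) *\<^sub>R (k n + k m)) ^ 2"
      unfolding e by (simp add: power2_eq_square)
    moreover have "norm ((x0 - k n) - (x0 - k m)) ^ 2 + norm ((x0 - k n) + (x0 - k m)) ^ 2
        = 2 * norm (x0 - k n) ^ 2 + 2 * norm (x0 - k m) ^ 2" by (rule parallelogram)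
    moreover have "(x0 - k n) - (x0 - k m) = - (k n - k m)" by simp
    ultimately show ?thesis using kd[of n] kd[of m] h by (simp only: norm_minus_cancel)
  qed
  have C: "Cauchy k"
  proof (rule metric_CauchyI)
    fix e :: real assume e: "e > 0"
    obtain N :: nat where N: "4 / e^2 < N" using reals_Archimedean2 by blast
    have Npos: "N > 0" using N e by (metis of_nat_0 gr0I not_less_iff_gr_or_eq zero_less_divide_iff zero_less_numeral zero_less_power)
    show "\<exists>M. \<forall>m\<ge>M. \<forall>n\<ge>M. dist (k m) (k n) < e"
    proof (intro exI allI impI)
      fix m n assume mN: "N \<le> m" and nN: "N \<le> n"
      have "2 / real (Suc m) \<le> 2 / N" using mN Npos by (intro divide_left_mono) auto
      moreover have "2 / real (Suc n) \<le> 2 / N" using nN Npos by (intro divide_left_mono) auto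
      moreover have "4 / real N < e ^ 2" using N e Npos by (simp add: field_simps)
      ultimately have "norm (k m - k n) ^ 2 < e ^ 2" using mid[of m n] by linarith
      then show "dist (k m) (k n) < e" using e by (simp add: dist_norm power_less_imp_less_base)
    qed
  qed
  then obtain p where p: "k \<longlonglongrightarrow> p" using Cauchy_convergent_iff convergent_def by blast
  have pK: "p \<in> K" using closed_sequentially[OF cl] kK p by blast
  have "(\<lambda>n. norm (x0 - k n) ^ 2) \<longlonglongrightarrow> norm (x0 - p) ^ 2"
    by (intro tendsto_intros p)
  moreover have "(\<lambda>n. d + 1 / Suc n) \<longlonglongrightarrow> d + 0"
    using tendsto_add[OF tendsto_const LIMSEQ_inverse_real_of_nat, of d] by (simp add: inverse_eq_divide)
  ultimately have pd: "norm (x0 - p) ^ 2 \<le> d"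
    using kd by (intro LIMSEQ_le[where X="\<lambda>n. norm (x0 - k n) ^ 2"]) (auto intro: less_imp_le)
  show ?thesis
  proof (intro bexI[OF _ pK] ballI)
    fix k0 assume k0: "k0 \<in> K"
    define w where "w = x0 - p"
    define s where "s = inner w k0"
    define q where "q = inner k0 k0"
    have q0: "q \<ge> 0" by (simp add: q_def)
    have ineq: "2 * t * s \<le> t^2 * q" for t
    proof -
      have "p + t *\<^sub>R k0 \<in> K" using pK k0 sub by (simp add: subspace_add subspace_mul)
      then have "d \<le> norm (x0 - (p + t *\<^sub>R k0)) ^ 2" by (rule dle)
      also have "\<dots> = norm (w - t *\<^sub>R k0) ^ 2" by (simp add: w_def algebra_simps)
      also have "\<dots> = norm w ^ 2 - 2 * t * s + t^2 * q"
        unfolding power2_norm_eq_inner s_def q_def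
        by (simp add: inner_diff_left inner_diff_right inner_commute power2_eq_square algebra_simps)
      finally show ?thesis using pd by (simp add: w_def)
    qed
    have "s = 0" using aux_quad[OF ineq q0] .
    then show "inner (x0 - p) k0 = 0" using \<open>s = 0\<close> by (simp add: s_def w_def)
  qed
qed


lemma riesz:
  fixes f :: "'a::{real_inner,complete_space} \<Rightarrow> real"
  assumes bl: "bounded_linear f"
  shows "\<exists>z. \<forall>x. f x = inner z x"
proof (cases "\<forall>x. f x = 0")
  case True then show ?thesis by (intro exI[of _ 0]) simp
next
  case False
  then obtain x0 where x0: "f x0 \<noteq> 0" by blast
  interpret f: bounded_linear f by (rule bl)
  let ?K = "{x. f x = 0}"
  have sub: "subspace ?K" by (auto simp: subspace_def f.add f.scaleR)
  have cl: "closed ?K" by (intro closed_Collect_eq continuous_on_id continuous_on_const f.continuous_on)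
  obtain p where pK: "f p = 0" and orth: "\<And>k. f k = 0 \<Longrightarrow> inner (x0 - p) k = 0"
    using orth_proj_exists[OF sub cl, of x0] by auto
  define w where "w = x0 - p"
  have fw: "f w = f x0" by (simp add: w_def f.diff pK)
  have ww: "inner w w \<noteq> 0" using fw x0 by auto
  show ?thesis
  proof (intro exI allI)
    fix x
    have "f (f x *\<^sub>R w - f w *\<^sub>R x) = 0" by (simp add: f.diff f.scaleR)
    then have "inner w (f x *\<^sub>R w - f w *\<^sub>R x) = 0" using orth by (simp add: w_def)
    then have "f x * inner w w = f w * inner w x" by (simp add: inner_diff_right)
    then show "f x = inner ((f w / inner w w) *\<^sub>R w) x" using ww
      by (simp add: field_simps)
  qed
qed

lemma adjoint_exists:
  fixes A :: "'a::{real_inner,complete_space} \<Rightarrow> 'a"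
  assumes bl: "bounded_linear A"
  shows "\<exists>B. bounded_linear B \<and> (\<forall>x y. inner (A x) y = inner x (B y))"
proof -
  interpret A: bounded_linear A by (rule bl)
  have "\<exists>z. \<forall>x. inner (A x) y = inner z x" for y
    by (rule riesz) (intro bounded_linear_inner_left_comp bl)
  then obtain B where B: "\<And>x y. inner (A x) y = inner (B y) x" by metis
  have adj: "inner (A x) y = inner x (B y)" for x y by (metis B inner_commute)
  have add: "B (y1 + y2) = B y1 + B y2" for y1 y2
    by (rule inner_eq_all) (simp add: adj[symmetric] inner_add_right A.add)
  have scl: "B (r *\<^sub>R y) = r *\<^sub>R B y" for r y
    by (rule inner_eq_all) (simp add: adj[symmetric])
  obtain K where K: "\<And>x. norm (A x) \<le> norm x * K" and Kp: "K > 0" using A.pos_bounded by blast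
  have nb: "norm (B y) \<le> norm y * K" for y
  proof (cases "B y = 0")
    case True then show ?thesis using Kp by simp
  next
    case False
    have "norm (B y) ^ 2 = inner (A (B y)) y" by (simp add: adj power2_norm_eq_inner)
    also have "\<dots> \<le> norm (A (B y)) * norm y" by (rule norm_cauchy_schwarz)
    also have "\<dots> \<le> norm (B y) * K * norm y" using K[of "B y"] by (simp add: mult_right_mono)
    finally have "norm (B y) * norm (B y) \<le> norm (B y) * (norm y * K)"
      by (simp add: power2_eq_square mult_ac)
    then show ?thesis using False by simp
  qed
  have "bounded_linear B" by (rule bounded_linear_intro[OF add scl nb])
  then show ?thesis using adj by blast
qed

lemma hadjoint_unique:
  fixes A B :: "'a::real_inner \<Rightarrow> 'a"
  assumes "\<forall>x y. inner (A x) y = inner x (B y)"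
  shows "hadjoint A = B"
  unfolding hadjoint_def
proof (rule the_equality[where P="\<lambda>B. \<forall>x y. inner (A x) y = inner x (B y)", OF assms])
  fix C assume C: "\<forall>x y. inner (A x) y = inner x (C y)"
  show "C = B"
  proof
    fix y show "C y = B y" by (rule inner_eq_all) (metis C assms)
  qed
qed

lemma hadjoint:
  fixes A :: "'a::{real_inner,complete_space} \<Rightarrow> 'a"
  assumes "bounded_linear A"
  shows "bounded_linear (hadjoint A)" "\<And>x y. inner (A x) y = inner x (hadjoint A y)"
proof -
  obtain B where "bounded_linear B" "\<forall>x y. inner (A x) y = inner x (B y)"
    using adjoint_exists[OF assms] by blast
  then show "bounded_linear (hadjoint A)" "\<And>x y. inner (A x) y = inner x (hadjoint A y)"
    using hadjoint_unique by auto
qed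

definition cm :: "'b::ring \<Rightarrow> 'b \<Rightarrow> bool" where "cm x y \<longleftrightarrow> x * y = y * x"

lemma cm_refl[intro]: "cm x x" by (simp add: cm_def)
lemma cmR_1[intro]: "cm x (1::'b::ring_1)" by (simp add: cm_def)
lemma cmL_1[intro]: "cm (1::'b::ring_1) x" by (simp add: cm_def)
lemma cmR_0[intro]: "cm x 0" by (simp add: cm_def)
lemma cmL_0[intro]: "cm 0 x" by (simp add: cm_def)
lemma cmR_add[intro]: "cm x y \<Longrightarrow> cm x z \<Longrightarrow> cm x (y + z)" by (simp add: cm_def algebra_simps)
lemma cmL_add[intro]: "cm y x \<Longrightarrow> cm z x \<Longrightarrow> cm (y + z) x" by (simp add: cm_def algebra_simps)
lemma cmR_diff[intro]: "cm x y \<Longrightarrow> cm x z \<Longrightarrow> cm x (y - z)" by (simp add: cm_def algebra_simps)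
lemma cmL_diff[intro]: "cm y x \<Longrightarrow> cm z x \<Longrightarrow> cm (y - z) x" by (simp add: cm_def algebra_simps)
lemma cmR_minus[intro]: "cm x y \<Longrightarrow> cm x (- y)" by (simp add: cm_def algebra_simps)
lemma cmL_minus[intro]: "cm y x \<Longrightarrow> cm (- y) x" by (simp add: cm_def algebra_simps)
lemma cmR_mult[intro]: "cm x y \<Longrightarrow> cm x z \<Longrightarrow> cm x (y * z)"
  by (simp add: cm_def) (metis mult.assoc)
lemma cmL_mult[intro]: "cm y x \<Longrightarrow> cm z x \<Longrightarrow> cm (y * z) x"
  by (simp add: cm_def) (metis mult.assoc)
lemma cmR_scaleR[intro]: "cm x y \<Longrightarrow> cm x (r *\<^sub>R (y::'b::real_algebra))" by (simp add: cm_def)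
lemma cmL_scaleR[intro]: "cm y x \<Longrightarrow> cm (r *\<^sub>R (y::'b::real_algebra)) x" by (simp add: cm_def)
lemma cmR_exp[intro]: "cm x y \<Longrightarrow> cm x (exp (y::'b::{real_normed_algebra_1,banach}))"
  by (simp add: cm_def exp_comm)
lemma cmL_exp[intro]: "cm y x \<Longrightarrow> cm (exp (y::'b::{real_normed_algebra_1,banach})) x"
  by (simp add: cm_def exp_comm)
lemma cm_sym: "cm x y \<Longrightarrow> cm y x" by (simp add: cm_def)

lemma deriv_from_quad:
  fixes f :: "complex \<Rightarrow> complex"
  assumes q: "\<And>w. norm w \<le> 1 \<Longrightarrow> norm (f (z0 + w) - f z0 - w * c) \<le> K * norm w ^ 2"
  shows "(f has_field_derivative c) (at z0)"
proof -
  have "((\<lambda>z. (f z - f z0) / (z - z0) - c) \<longlongrightarrow> 0) (at z0)"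
  proof (rule Lim_null_comparison)
    show "\<forall>\<^sub>F z in at z0. norm ((f z - f z0) / (z - z0) - c) \<le> K * norm (z - z0)"
      unfolding eventually_at
    proof (intro exI[of _ 1] conjI ballI impI allI)
      fix z assume z: "z \<noteq> z0 \<and> dist z z0 < 1"
      define w where "w = z - z0"
      have w0: "w \<noteq> 0" and w1: "norm w \<le> 1" using z by (auto simp: w_def dist_norm)
      have "(f z - f z0) / (z - z0) - c = (f (z0 + w) - f z0 - w * c) / w"
        using w0 by (simp add: w_def field_simps)
      then have "norm ((f z - f z0) / (z - z0) - c) = norm (f (z0 + w) - f z0 - w * c) / norm w"
        by (simp add: norm_divide)
      also have "\<dots> \<le> K * norm w ^ 2 / norm w" using q[OF w1] by (simp add: divide_right_mono)
      also have "\<dots> = K * norm w" using w0 by (simp add: power2_eq_square)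
      finally show "norm ((f z - f z0) / (z - z0) - c) \<le> K * norm (z - z0)" by (simp add: w_def)
    qed simp
    show "((\<lambda>z. K * norm (z - z0)) \<longlongrightarrow> 0) (at z0)"
      by (auto intro!: tendsto_eq_intros)
  qed
  then show ?thesis by (simp add: has_field_derivative_iff LIM_zero_iff)
qed

lemma iso_exp:
  fixes Z :: "'a::{real_inner,complete_space} U"
  assumes sk: "\<And>u. inner (pU Z u) u = 0"
  shows "norm (pU (exp Z) u) = norm u"
proof -
  define g where "g t = pU (exp (t *\<^sub>R Z)) u" for t
  have blp: "bounded_linear (\<lambda>w. blinfun_apply (pU w) u)"
    by (rule bounded_linear_compose[OF blinfun.bounded_linear_left bl_pU])
  have gd: "(g has_vector_derivative pU Z (g t)) (at t)" for t
  proof -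
    have "((\<lambda>t. pU (exp (t *\<^sub>R Z)) u) has_vector_derivative pU (Z * exp (t *\<^sub>R Z)) u) (at t)"
      by (rule bounded_linear.has_vector_derivative[OF blp exp_scaleR_has_vector_derivative_left])
    then show ?thesis unfolding g_def by (simp add: pU_mult)
  qed
  define hh where "hh t = inner (g t) (g t)" for t
  have d: "(hh has_vector_derivative (inner (g t) (pU Z (g t)) + inner (pU Z (g t)) (g t))) (at t)" for t
    unfolding hh_def by (rule bounded_bilinear.has_vector_derivative[OF bounded_bilinear_inner gd gd])
  have "(hh has_real_derivative 0) (at t)" for t
  proof -
    have "inner (g t) (pU Z (g t)) = 0" "inner (pU Z (g t)) (g t) = 0"
      using sk[of "g t"] by (simp_all add: inner_commute)
    then show ?thesis using d[of t] by (simp add: has_real_derivative_iff_has_vector_derivative)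
  qed
  then have "hh 1 = hh 0" by (intro DERIV_isconst_all) auto
  then have "inner (pU (exp Z) u) (pU (exp Z) u) = inner u u" by (simp add: hh_def g_def)
  then show ?thesis by (simp add: norm_eq_sqrt_inner)
qed


locale fug =
  fixes Jb Ab Nb Sb :: "'a::{real_inner,complete_space} \<Rightarrow>\<^sub>L 'a"
  assumes J2: "\<And>x. Jb (Jb x) = - x"
    and Jsk: "\<And>x y. inner (Jb x) y = - inner x (Jb y)"
    and AJ: "Ab o\<^sub>L Jb = Jb o\<^sub>L Ab" and NJ: "Nb o\<^sub>L Jb = Jb o\<^sub>L Nb" and SJ: "Sb o\<^sub>L Jb = Jb o\<^sub>L Sb"
    and adj: "\<And>x y. inner (Nb x) y = inner x (Sb y)"
    and nor: "Sb o\<^sub>L Nb = Nb o\<^sub>L Sb"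
    and AN: "Ab o\<^sub>L Nb = Nb o\<^sub>L Ab"
begin

definition "j = inj Jb"
definition "a = inj Ab"
definition "n = inj Nb"
definition "s = inj Sb"

lemma cm_atoms: "cm j a" "cm a j" "cm j n" "cm n j" "cm j s" "cm s j" "cm n s" "cm s n" "cm a n" "cm n a"
  by (simp_all add: cm_def j_def a_def n_def s_def inj_mult AJ NJ SJ nor AN)

definition L :: "complex \<Rightarrow> 'a U" where "L z = Re z *\<^sub>R 1 + Im z *\<^sub>R j"
definition Lc :: "complex \<Rightarrow> 'a U" where "Lc z = Re z *\<^sub>R 1 - Im z *\<^sub>R j"

lemma cm_L[intro]: "cm x j \<Longrightarrow> cm x (L z)" "cm j x \<Longrightarrow> cm (L z) x"
  "cm x j \<Longrightarrow> cm x (Lc z)" "cm j x \<Longrightarrow> cm (Lc z) x"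
  by (auto simp: L_def Lc_def)

lemma pU_L: "blinfun_apply (pU (L z)) v = Re z *\<^sub>R v + Im z *\<^sub>R Jb v"
  by (simp add: L_def j_def pU_add pU_scaleR blinfun.bilinear_simps)
lemma pU_Lc: "blinfun_apply (pU (Lc z)) v = Re z *\<^sub>R v - Im z *\<^sub>R Jb v"
  by (simp add: Lc_def j_def pU_diff pU_scaleR blinfun.bilinear_simps)

lemma JJ: "inner (Jb x) (Jb y) = inner x y"
  using Jsk[of x "Jb y"] by (simp add: J2)
lemma normJ: "norm (Jb x) = norm x"
  by (simp add: norm_eq_sqrt_inner JJ)

definition cin :: "'a \<Rightarrow> 'a \<Rightarrow> complex" where "cin u v = Complex (inner u v) (inner u (Jb v))"

lemma cin_L: "cin (pU (L z) v) w = z * cin v w"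
  by (simp add: cin_def pU_L inner_add_left Jsk JJ J2 complex_eq_iff algebra_simps)
lemma cin_diff: "cin (u - v) w = cin u w - cin v w"
  by (simp add: cin_def inner_diff_left complex_eq_iff)
lemma cin_add: "cin (u + v) w = cin u w + cin v w"
  by (simp add: cin_def inner_add_left complex_eq_iff)
lemma Re_cin: "Re (cin u w) = inner u w" by (simp add: cin_def)
lemma norm_cin: "norm (cin u w) \<le> 2 * (norm u * norm w)"
proof -
  have "norm (cin u w) \<le> \<bar>inner u w\<bar> + \<bar>inner u (Jb w)\<bar>"
    using cmod_le[of "cin u w"] by (simp add: cin_def)
  also have "\<dots> \<le> norm u * norm w + norm u * norm (Jb w)"
    by (intro add_mono Cauchy_Schwarz_ineq2)
  finally show ?thesis by (simp add: normJ)
qed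


lemma NJp: "Nb (Jb u) = Jb (Nb u)" using NJ by (metis blinfun_apply_blinfun_compose)
lemma SJp: "Sb (Jb u) = Jb (Sb u)" using SJ by (metis blinfun_apply_blinfun_compose)
lemma AJp: "Ab (Jb u) = Jb (Ab u)" using AJ by (metis blinfun_apply_blinfun_compose)

definition F :: "complex \<Rightarrow> 'a U" where "F z = exp (-(L z * s)) * a * exp (L z * s)"
definition Y :: "complex \<Rightarrow> 'a U" where "Y z = Lc z * n - L z * s"

lemma F_eq: "F z = exp (Y z) * a * exp (- Y z)"
proof -
  define W where "W = Lc z * n"
  have c1: "cm (Y z) (- W)" unfolding Y_def W_def using cm_atoms by blast
  have c2: "cm W (- Y z)" unfolding Y_def W_def using cm_atoms by blast
  have c3: "cm a (- W)" unfolding W_def using cm_atoms by blast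
  have e1: "exp (-(L z * s)) = exp (Y z) * exp (- W)"
  proof -
    have "-(L z * s) = Y z + - W" by (simp add: Y_def W_def)
    then show ?thesis using exp_add_commuting[of "Y z" "- W"] c1 by (simp add: cm_def)
  qed
  have e2: "exp (L z * s) = exp W * exp (- Y z)"
  proof -
    have "L z * s = W + - Y z" by (simp add: Y_def W_def)
    then show ?thesis using exp_add_commuting[of W "- Y z"] c2 by (simp add: cm_def)
  qed
  have e3: "exp (- W) * a = a * exp (- W)" using exp_comm[of a "- W"] c3 by (simp add: cm_def)
  have e4: "exp (- W) * exp W = 1" using exp_minus_inverse[of "- W"] by simp
  have "F z = exp (Y z) * (exp (- W) * a) * exp W * exp (- Y z)"
    by (simp add: F_def e1 e2 mult.assoc)
  also have "\<dots> = exp (Y z) * a * (exp (- W) * exp W) * exp (- Y z)"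
    by (simp add: e3 mult.assoc)
  also have "\<dots> = exp (Y z) * a * exp (- Y z)" by (simp add: e4)
  finally show ?thesis .
qed

lemma skewY: "inner (pU (Y z) u) u = 0"
proof -
  have e1: "inner (Sb u) u = inner (Nb u) u" by (metis adj inner_commute)
  have e2: "inner (Jb (Sb u)) u = - inner (Jb (Nb u)) u"
  proof -
    have "inner (Jb (Sb u)) u = - inner (Sb u) (Jb u)" by (rule Jsk)
    also have "\<dots> = - inner (Nb (Jb u)) u" by (metis adj inner_commute)
    also have "\<dots> = - inner (Jb (Nb u)) u" by (simp add: NJp)
    finally show ?thesis .
  qed
  show ?thesis
    by (simp add: Y_def pU_diff pU_mult n_def s_def pU_L pU_Lc blinfun.bilinear_simps
        inner_diff_left inner_add_left e1 e2)
qed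

lemma F_bound: "norm (pU (F z) x) \<le> norm Ab * norm x"
proof -
  have sk2: "inner (pU (- Y z) u) u = 0" for u by (simp add: pU_minus skewY blinfun.bilinear_simps)
  have "pU (F z) x = pU (exp (Y z)) (Ab (pU (exp (- Y z)) x))"
    by (simp add: F_eq pU_mult a_def)
  then have "norm (pU (F z) x) = norm (Ab (pU (exp (- Y z)) x))"
    by (simp add: iso_exp[OF skewY])
  also have "\<dots> \<le> norm Ab * norm (pU (exp (- Y z)) x)" by (rule norm_blinfun)
  also have "\<dots> = norm Ab * norm x" by (simp add: iso_exp[OF sk2])
  finally show ?thesis .
qed


lemma norm_L: "norm (L w) \<le> norm w * (1 + norm j)"
proof -
  have "norm (L w) \<le> norm (Re w *\<^sub>R (1::'a U)) + norm (Im w *\<^sub>R j)"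
    unfolding L_def by (rule norm_triangle_ineq)
  also have "\<dots> = \<bar>Re w\<bar> + \<bar>Im w\<bar> * norm j" by simp
  also have "\<dots> \<le> norm w + norm w * norm j"
    by (intro add_mono mult_right_mono abs_Re_le_cmod abs_Im_le_cmod) auto
  finally show ?thesis by (simp add: algebra_simps)
qed

lemma rest_identity:
  fixes G Z E E' :: "'b::ring_1"
  shows "E' * G * E - G - (G * Z - Z * G) = G * (E - 1 - Z) - Z * G * (E - 1) + (E' - 1 + Z) * G * E"
  by (simp add: algebra_simps)

lemma rest_bound:
  fixes G Z :: "'a U" and c0 :: real
  assumes m: "norm Z \<le> c0"
  shows "norm (G * (exp Z - 1 - Z) - Z * G * (exp Z - 1) + (exp (- Z) - 1 - (- Z)) * G * exp Z)
     \<le> norm Z ^ 2 * (norm G * (exp c0 + 1 + c0 * exp c0 + exp c0 * exp c0))"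
proof -
  define m where "m = norm Z"
  define g where "g = norm G"
  have m0: "0 \<le> m" and g0: "0 \<le> g" by (simp_all add: m_def g_def)
  have mc: "m \<le> c0" using m by (simp add: m_def)
  have em: "exp m \<le> exp c0" using mc by simp
  have mm: "m^2 * exp m \<le> m^2 * exp c0" by (intro mult_left_mono em) simp
  have R: "norm (exp Z - 1 - Z) \<le> m^2 * exp c0"
    using exp_rem2[of Z] mm unfolding m_def by linarith
  have R1: "norm (exp Z - 1) \<le> m + m^2 * exp c0"
    using exp_rem1[of Z] mm unfolding m_def by linarith
  have R': "norm (exp (- Z) - 1 - (- Z)) \<le> m^2 * exp c0"
    using exp_rem2[of "- Z"] mm unfolding m_def by simp
  have E: "norm (exp Z) \<le> exp c0" using norm_exp[of Z] em unfolding m_def by linarith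
  have t1: "norm (G * (exp Z - 1 - Z)) \<le> m^2 * (g * exp c0)"
  proof -
    have "norm (G * (exp Z - 1 - Z)) \<le> g * norm (exp Z - 1 - Z)" by (simp add: g_def norm_mult_ineq)
    also have "\<dots> \<le> g * (m^2 * exp c0)" using R g0 by (rule mult_left_mono)
    finally show ?thesis by (simp add: algebra_simps)
  qed
  have t2: "norm (Z * G * (exp Z - 1)) \<le> m^2 * (g * (1 + c0 * exp c0))"
  proof -
    have "norm (Z * G * (exp Z - 1)) \<le> norm (Z * G) * norm (exp Z - 1)" by (rule norm_mult_ineq)
    also have "\<dots> \<le> m * g * norm (exp Z - 1)"
      by (intro mult_right_mono) (simp_all add: m_def g_def norm_mult_ineq)
    finally have "norm (Z * G * (exp Z - 1)) \<le> m * g * norm (exp Z - 1)" .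
    also have "\<dots> \<le> m * g * (m + m^2 * exp c0)" using R1 m0 g0 by (simp add: mult_left_mono)
    also have "\<dots> = m^2 * (g * (1 + m * exp c0))" by (simp add: power2_eq_square algebra_simps)
    also have "\<dots> \<le> m^2 * (g * (1 + c0 * exp c0))"
      using mc m0 g0 by (intro mult_left_mono add_left_mono mult_right_mono) auto
    finally show ?thesis .
  qed
  have t3: "norm ((exp (- Z) - 1 - (- Z)) * G * exp Z) \<le> m^2 * (g * (exp c0 * exp c0))"
  proof -
    have "norm ((exp (- Z) - 1 - (- Z)) * G * exp Z) \<le> norm ((exp (- Z) - 1 - (- Z)) * G) * norm (exp Z)"
      by (rule norm_mult_ineq)
    also have "\<dots> \<le> norm (exp (- Z) - 1 - (- Z)) * g * norm (exp Z)"
      by (intro mult_right_mono) (simp_all add: g_def norm_mult_ineq)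
    finally have "norm ((exp (- Z) - 1 - (- Z)) * G * exp Z) \<le> norm (exp (- Z) - 1 - (- Z)) * g * norm (exp Z)" .
    also have "\<dots> \<le> (m^2 * exp c0) * g * exp c0"
      using R' E g0 by (intro mult_mono) auto
    finally show ?thesis by (simp add: algebra_simps)
  qed
  have "norm (G * (exp Z - 1 - Z) - Z * G * (exp Z - 1) + (exp (- Z) - 1 - (- Z)) * G * exp Z)
      \<le> norm (G * (exp Z - 1 - Z)) + norm (Z * G * (exp Z - 1)) + norm ((exp (- Z) - 1 - (- Z)) * G * exp Z)"
    using norm_triangle_ineq[of "G * (exp Z - 1 - Z) - Z * G * (exp Z - 1)" "(exp (- Z) - 1 - (- Z)) * G * exp Z"]
      norm_triangle_ineq4[of "G * (exp Z - 1 - Z)" "Z * G * (exp Z - 1)"] by linarith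
  also have "\<dots> \<le> m^2 * (g * exp c0) + m^2 * (g * (1 + c0 * exp c0)) + m^2 * (g * (exp c0 * exp c0))"
    using t1 t2 t3 by linarith
  finally show ?thesis by (simp add: m_def g_def algebra_simps)
qed


definition "c0 = (1 + norm j) * norm s"

lemma phi_quad:
  assumes cG: "cm G j" and w1: "norm w \<le> 1"
  shows "norm (cin (pU (exp (-(L w * s)) * G * exp (L w * s)) x) y - cin (pU G x) y
            - w * cin (pU (G * s - s * G) x) y)
         \<le> (2 * (c0^2 * (norm G * (exp c0 + 1 + c0 * exp c0 + exp c0 * exp c0))) * norm x * norm y) * norm w ^ 2"
proof -
  define Z where "Z = L w * s"
  define Q where "Q = norm G * (exp c0 + 1 + c0 * exp c0 + exp c0 * exp c0)"
  have Q0: "Q \<ge> 0" by (simp add: Q_def c0_def)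
  have c00: "c0 \<ge> 0" by (simp add: c0_def)
  have mZ: "norm Z \<le> norm w * c0"
  proof -
    have "norm Z \<le> norm (L w) * norm s" unfolding Z_def by (rule norm_mult_ineq)
    also have "\<dots> \<le> norm w * (1 + norm j) * norm s" by (intro mult_right_mono norm_L) simp
    finally show ?thesis by (simp add: c0_def mult.assoc)
  qed
  have mZ1: "norm Z \<le> c0" using mZ w1 c00 by (meson mult_left_le_one_le norm_ge_zero order_trans)
  have cGL: "G * L w = L w * G" using cm_L(1)[OF cG] by (simp add: cm_def)
  have GZ: "G * Z = L w * (G * s)" unfolding Z_def by (metis cGL mult.assoc)
  have ZG: "Z * G = L w * (s * G)" unfolding Z_def by (simp add: mult.assoc)
  have LD: "L w * (G * s - s * G) = G * Z - Z * G"
    unfolding GZ ZG by (rule right_diff_distrib)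
  have key: "w * cin (pU (G * s - s * G) x) y = cin (pU (G * Z - Z * G) x) y"
    by (simp add: LD[symmetric] pU_mult cin_L)
  define rest where "rest = G * (exp Z - 1 - Z) - Z * G * (exp Z - 1) + (exp (- Z) - 1 - (- Z)) * G * exp Z"
  have rid: "exp (- Z) * G * exp Z - G - (G * Z - Z * G) = rest"
    unfolding rest_def using rest_identity[of "exp (- Z)" G "exp Z" Z] by simp
  have diff: "cin (pU (exp (-(L w * s)) * G * exp (L w * s)) x) y - cin (pU G x) y
            - w * cin (pU (G * s - s * G) x) y = cin (pU rest x) y"
    unfolding key rid[symmetric] Z_def[symmetric]
    by (simp add: pU_diff blinfun.bilinear_simps cin_diff)
  have "norm (cin (pU rest x) y) \<le> 2 * (norm (pU rest x) * norm y)" by (rule norm_cin)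
  also have "\<dots> \<le> 2 * (norm rest * norm x * norm y)"
  proof -
    have "norm (pU rest x) \<le> norm rest * norm x"
      using norm_blinfun[of "pU rest" x] mult_right_mono[OF norm_pU[of rest] norm_ge_zero[of x]]
      by linarith
    then show ?thesis by (intro mult_left_mono mult_right_mono) auto
  qed
  also have "\<dots> \<le> 2 * (norm Z ^ 2 * Q * norm x * norm y)"
    using rest_bound[OF mZ1, of G] unfolding rest_def[symmetric] Q_def
    by (intro mult_left_mono mult_right_mono) auto
  also have "\<dots> \<le> 2 * ((norm w * c0) ^ 2 * Q * norm x * norm y)"
    using mZ Q0 by (intro mult_left_mono mult_right_mono power_mono) auto
  also have "\<dots> = (2 * (c0^2 * Q) * norm x * norm y) * norm w ^ 2"
    by (simp add: power_mult_distrib algebra_simps)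
  finally show ?thesis unfolding diff Q_def .
qed


lemma L_add: "L (z0 + w) = L z0 + L w"
  by (simp add: L_def scaleR_add_left algebra_simps)
lemma L_0: "L 0 = 0" by (simp add: L_def)

lemma F_shift: "F (z0 + w) = exp (-(L w * s)) * F z0 * exp (L w * s)"
proof -
  have c: "cm (L w * s) (L z0 * s)" using cm_atoms by blast
  have e1: "exp (-(L (z0 + w) * s)) = exp (-(L w * s)) * exp (-(L z0 * s))"
  proof -
    have "-(L (z0 + w) * s) = -(L w * s) + -(L z0 * s)" by (simp add: L_add algebra_simps)
    moreover have "cm (-(L w * s)) (-(L z0 * s))" using c by blast
    ultimately show ?thesis using exp_add_commuting[of "-(L w * s)" "-(L z0 * s)"]
      by (simp only: cm_def)
  qed
  have e2: "exp (L (z0 + w) * s) = exp (L z0 * s) * exp (L w * s)"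
  proof -
    have "L (z0 + w) * s = L z0 * s + L w * s" by (simp add: L_add algebra_simps)
    moreover have "cm (L z0 * s) (L w * s)" using c by (rule cm_sym)
    ultimately show ?thesis using exp_add_commuting by (simp add: cm_def)
  qed
  show ?thesis unfolding F_def e1 e2 by (simp add: mult.assoc)
qed

lemma cm_F: "cm (F z) j" unfolding F_def using cm_atoms by blast

lemma F_0: "F 0 = a" by (simp add: F_def L_0)

lemma h_deriv:
  "((\<lambda>z. cin (pU (F z) x) y) has_field_derivative cin (pU (F z0 * s - s * F z0) x) y) (at z0)"
proof (rule deriv_from_quad)
  fix w :: complex assume "norm w \<le> 1"
  then show "norm (cin (pU (F (z0 + w)) x) y - cin (pU (F z0) x) y - w * cin (pU (F z0 * s - s * F z0) x) y)
    \<le> (2 * (c0^2 * (norm (F z0) * (exp c0 + 1 + c0 * exp c0 + exp c0 * exp c0))) * norm x * norm y) * norm w ^ 2"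
    unfolding F_shift by (rule phi_quad[OF cm_F])
qed

lemma deriv_zero: "cin (pU (a * s - s * a) x) y = 0"
proof -
  define h where "h z = cin (pU (F z) x) y" for z
  define c where "c = cin (pU (a * s - s * a) x) y"
  define B where "B = 2 * (norm Ab * norm x * norm y)"
  have hd: "(h has_field_derivative cin (pU (F z0 * s - s * F z0) x) y) (at z0)" for z0
    unfolding h_def by (rule h_deriv)
  have hol: "h holomorphic_on UNIV"
    using hd by (auto simp: holomorphic_on_open)
  have d0: "deriv h 0 = c" using hd[of 0] by (simp add: DERIV_imp_deriv F_0 c_def)
  have hb: "norm (h z) \<le> B" for z
  proof -
    have "norm (h z) \<le> 2 * (norm (pU (F z) x) * norm y)" unfolding h_def by (rule norm_cin)
    also have "\<dots> \<le> B" unfolding B_def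
      using F_bound[of z x] by (intro mult_left_mono mult_right_mono) auto
    finally show ?thesis .
  qed
  have cr: "norm c \<le> B / r" if r: "r > 0" for r
  proof -
    have "norm ((deriv ^^ 1) h 0) \<le> fact 1 * B / r ^ 1"
      by (rule Cauchy_inequality[OF holomorphic_on_subset[OF hol] holomorphic_on_imp_continuous_on[OF holomorphic_on_subset[OF hol]] r])
         (auto simp: hb)
    then show ?thesis by (simp add: d0)
  qed
  show ?thesis
  proof (rule ccontr)
    assume "cin (pU (a * s - s * a) x) y \<noteq> 0"
    then have nc: "norm c > 0" by (simp add: c_def)
    have B0: "B \<ge> 0" by (simp add: B_def)
    define r where "r = 2 * (B + 1) / norm c"
    have rp: "r > 0" using nc B0 by (simp add: r_def)
    have "norm c \<le> B / r" by (rule cr[OF rp])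
    also have "\<dots> = B * norm c / (2 * (B + 1))" using nc B0 by (simp add: r_def field_simps)
    also have "\<dots> < norm c"
    proof -
      have p: "0 \<le> B * norm c" using B0 by simp
      have e: "2 * (B + 1) * norm c - B * norm c = B * norm c + 2 * norm c" by (simp add: algebra_simps)
      have "B * norm c < 2 * (B + 1) * norm c" using e nc p by linarith
      then show ?thesis using B0 by (simp add: divide_less_eq mult.commute)
    qed
    finally show False by simp
  qed
qed

lemma fug_main: "Ab o\<^sub>L Sb = Sb o\<^sub>L Ab"
proof (rule blinfun_eqI)
  fix x
  have "inner (Ab (Sb x) - Sb (Ab x)) y = 0" for y
    using arg_cong[OF deriv_zero[of x y], of Re]
    by (simp add: Re_cin a_def s_def pU_diff pU_mult blinfun.bilinear_simps)
  then have "Ab (Sb x) - Sb (Ab x) = 0" by (metis inner_eq_zero_iff)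
  then show "(Ab o\<^sub>L Sb) x = (Sb o\<^sub>L Ab) x" by simp
qed

end

lemma fuglede:
  fixes J A N :: "'a::{real_inner,complete_space} \<Rightarrow> 'a"
  assumes "complex_structure J" "bounded_clinear_op J A" "normal_op J N" "A \<circ> N = N \<circ> A"
  shows "A \<circ> hadjoint N = hadjoint N \<circ> A"
proof -
  have lJ: "linear J" and J2: "\<And>x. J (J x) = - x" and JJ: "\<And>x y. inner (J x) (J y) = inner x y"
    using assms(1) by (auto simp: complex_structure_def)
  interpret J: linear J by (rule lJ)
  have blJ: "bounded_linear J"
    by (rule bounded_linear_intro[where K=1]) (auto simp: J.add J.scale norm_eq_sqrt_inner JJ)
  have Jsk: "inner (J x) y = - inner x (J y)" for x y
    using JJ[of "J x" y] by (simp add: J2)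
  have blA: "bounded_linear A" and AJ: "\<And>x. A (J x) = J (A x)"
    using assms(2) by (auto simp: bounded_clinear_op_def)
  have blN: "bounded_linear N" and NJ: "\<And>x. N (J x) = J (N x)" and nor: "hadjoint N \<circ> N = N \<circ> hadjoint N"
    using assms(3) by (auto simp: normal_op_def bounded_clinear_op_def)
  note hN = hadjoint[OF blN]
  have SJ: "hadjoint N (J x) = J (hadjoint N x)" for x
  proof (rule inner_eq_all)
    fix z
    have "inner z (hadjoint N (J x)) = inner (N z) (J x)" by (simp add: hN(2))
    also have "\<dots> = - inner (J (N z)) x" by (simp add: Jsk)
    also have "\<dots> = - inner (N (J z)) x" by (simp add: NJ)
    also have "\<dots> = - inner (J z) (hadjoint N x)" by (simp add: hN(2))
    also have "\<dots> = inner z (J (hadjoint N x))" by (simp add: Jsk)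
    finally show "inner z (hadjoint N (J x)) = inner z (J (hadjoint N x))" .
  qed
  interpret f: fug "Blinfun J" "Blinfun A" "Blinfun N" "Blinfun (hadjoint N)"
  proof
    show "\<And>x. Blinfun J (Blinfun J x) = - x" by (simp add: bounded_linear_Blinfun_apply blJ J2)
    show "\<And>x y. inner (Blinfun J x) y = - inner x (Blinfun J y)" by (simp add: bounded_linear_Blinfun_apply blJ Jsk)
    show "Blinfun A o\<^sub>L Blinfun J = Blinfun J o\<^sub>L Blinfun A"
      by (rule blinfun_eqI) (simp add: bounded_linear_Blinfun_apply blJ blA AJ)
    show "Blinfun N o\<^sub>L Blinfun J = Blinfun J o\<^sub>L Blinfun N"
      by (rule blinfun_eqI) (simp add: bounded_linear_Blinfun_apply blJ blN NJ)
    show "Blinfun (hadjoint N) o\<^sub>L Blinfun J = Blinfun J o\<^sub>L Blinfun (hadjoint N)"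
      by (rule blinfun_eqI) (simp add: bounded_linear_Blinfun_apply blJ hN(1) SJ)
    show "\<And>x y. inner (Blinfun N x) y = inner x (Blinfun (hadjoint N) y)"
      by (simp add: bounded_linear_Blinfun_apply blN hN)
    show "Blinfun (hadjoint N) o\<^sub>L Blinfun N = Blinfun N o\<^sub>L Blinfun (hadjoint N)"
      by (rule blinfun_eqI) (simp add: bounded_linear_Blinfun_apply blN hN(1) nor[unfolded fun_eq_iff o_def, rule_format])
    show "Blinfun A o\<^sub>L Blinfun N = Blinfun N o\<^sub>L Blinfun A"
      by (rule blinfun_eqI) (simp add: bounded_linear_Blinfun_apply blN blA assms(4)[unfolded fun_eq_iff o_def, rule_format])
  qed
  show ?thesis
  proof
    fix x
    have "(Blinfun A o\<^sub>L Blinfun (hadjoint N)) x = (Blinfun (hadjoint N) o\<^sub>L Blinfun A) x"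
      by (simp only: f.fug_main)
    then show "(A \<circ> hadjoint N) x = (hadjoint N \<circ> A) x"
      by (simp add: bounded_linear_Blinfun_apply blA hN(1))
  qed
qed

lemma numrad:
  fixes S :: "'a::real_inner \<Rightarrow> 'a"
  assumes lin: "linear S" and sym: "\<And>x y. inner (S x) y = inner x (S y)"
    and q: "\<And>x. \<bar>inner (S x) x\<bar> \<le> c * norm x ^ 2"
  shows "norm (S x) \<le> c * norm x"
proof (cases "S x = 0")
  case True
  have "0 \<le> c * norm x ^ 2 \<Longrightarrow> x \<noteq> 0 \<Longrightarrow> 0 \<le> c" by (simp add: zero_le_mult_iff)
  then show ?thesis using True q[of x] by (cases "x = 0") (auto simp: linear_0[OF lin])
next
  case False
  interpret S: linear S by (rule lin)
  have x0: "x \<noteq> 0" using False S.zero by auto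
  have key: "4 * inner (S x) y \<le> 2 * c * (norm x ^ 2 + norm y ^ 2)" for y
  proof -
    have "4 * inner (S x) y = inner (S (x + y)) (x + y) - inner (S (x - y)) (x - y)"
      using sym[of y x] by (simp add: S.add S.diff inner_add_left inner_add_right inner_diff_left inner_diff_right inner_commute)
    also have "\<dots> \<le> c * norm (x + y) ^ 2 + c * norm (x - y) ^ 2"
      using q[of "x+y"] q[of "x-y"] by linarith
    also have "\<dots> = c * (norm (x - y) ^ 2 + norm (x + y) ^ 2)" by (simp add: algebra_simps)
    also have "\<dots> = 2 * c * (norm x ^ 2 + norm y ^ 2)" by (simp add: parallelogram algebra_simps)
    finally show ?thesis .
  qed
  define y where "y = (norm x / norm (S x)) *\<^sub>R S x"
  have ny: "norm y = norm x" using False by (simp add: y_def)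
  have iy: "inner (S x) y = norm x * norm (S x)" using False
    by (simp add: y_def power2_norm_eq_inner[symmetric] power2_eq_square)
  have "4 * (norm x * norm (S x)) \<le> 4 * c * norm x ^ 2"
    using key[of y] unfolding iy ny by simp
  then have "norm x * norm (S x) \<le> norm x * (c * norm x)" by (simp add: power2_eq_square mult_ac)
  then show ?thesis using x0 by simp
qed

lemma comm_bound:
  fixes B :: "'a::{real_inner,complete_space} \<Rightarrow> 'a"
  assumes bl: "bounded_linear B"
  shows "onorm (self_commutator B) \<le> (onorm B)^2"
proof -
  interpret B: bounded_linear B by (rule bl)
  note hb = hadjoint[OF bl]
  interpret Bs: bounded_linear "hadjoint B" by (rule hb(1))
  let ?S = "self_commutator B"
  let ?c = "(onorm B)^2"
  have blS: "bounded_linear ?S" unfolding self_commutator_def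
    by (intro bounded_linear_sub bounded_linear_compose[OF hb(1) bl] bounded_linear_compose[OF bl hb(1)])
  have nB: "norm (B x) \<le> onorm B * norm x" for x by (rule onorm[OF bl])
  have nBs: "norm (hadjoint B x) \<le> onorm B * norm x" for x
  proof (cases "hadjoint B x = 0")
    case True then show ?thesis by (simp add: onorm_pos_le[OF bl])
  next
    case False
    have "norm (hadjoint B x) ^ 2 = inner (B (hadjoint B x)) x"
      by (simp add: power2_norm_eq_inner) (metis hb(2) inner_commute)
    also have "\<dots> \<le> norm (B (hadjoint B x)) * norm x" by (rule norm_cauchy_schwarz)
    also have "\<dots> \<le> onorm B * norm (hadjoint B x) * norm x" using nB by (simp add: mult_right_mono)
    finally have "norm (hadjoint B x) * norm (hadjoint B x) \<le> norm (hadjoint B x) * (onorm B * norm x)"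
      by (simp add: power2_eq_square mult_ac)
    then show ?thesis using False by simp
  qed
  have sym: "inner (?S x) y = inner x (?S y)" for x y
    unfolding self_commutator_def
    by (simp add: inner_diff_left inner_diff_right hb(2)[symmetric] inner_commute)
       (metis hb(2) inner_commute)
  have q: "\<bar>inner (?S x) x\<bar> \<le> ?c * norm x ^ 2" for x
  proof -
    have e: "inner (?S x) x = norm (B x) ^ 2 - norm (hadjoint B x) ^ 2"
      unfolding self_commutator_def
      by (simp add: inner_diff_left power2_norm_eq_inner) (metis hb(2) inner_commute)
    have "norm (B x) ^ 2 \<le> ?c * norm x ^ 2"
      using nB[of x] by (metis norm_ge_zero power_mono power_mult_distrib)
    moreover have "norm (hadjoint B x) ^ 2 \<le> ?c * norm x ^ 2"
      using nBs[of x] by (metis norm_ge_zero power_mono power_mult_distrib)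
    ultimately show ?thesis unfolding e
      by (smt (verit) zero_le_power2)
  qed
  show ?thesis
    using numrad[OF bounded_linear.linear[OF blS] sym q]
    by (intro onorm_bound) auto
qed

theorem proposition1:
  fixes J A :: "'a::{real_inner, complete_space} \<Rightarrow> 'a"
  assumes "complex_structure J"
    and "bounded_clinear_op J A"
  shows "onorm (self_commutator A) \<le> (INF M \<in> normal_commutant J A. (onorm (\<lambda>x. A x + M x))\<^sup>2)"
proof (rule cINF_greatest)
  have lJ: "linear J" using assms(1) by (simp add: complex_structure_def)
  have h0: "hadjoint (\<lambda>x::'a. 0) = (\<lambda>x. 0)" by (rule hadjoint_unique) simp
  have "(\<lambda>x::'a. 0) \<in> normal_commutant J A"
    using assms(2) lJ
    by (auto simp: normal_commutant_def normal_op_def bounded_clinear_op_def h0 linear_0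
        bounded_linear.linear[THEN linear_0] o_def)
  then show "normal_commutant J A \<noteq> {}" by blast
next
  fix M assume M: "M \<in> normal_commutant J A"
  have blA: "bounded_linear A" using assms(2) by (simp add: bounded_clinear_op_def)
  have nM: "normal_op J M" and AM: "A \<circ> M = M \<circ> A" using M by (auto simp: normal_commutant_def)
  have blM: "bounded_linear M" using nM by (simp add: normal_op_def bounded_clinear_op_def)
  have nor: "hadjoint M \<circ> M = M \<circ> hadjoint M" using nM by (simp add: normal_op_def)
  have F: "A \<circ> hadjoint M = hadjoint M \<circ> A" by (rule fuglede[OF assms nM AM])
  note hA = hadjoint[OF blA] and hM = hadjoint[OF blM]
  interpret A: bounded_linear A by (rule blA)
  interpret M: bounded_linear M by (rule blM)
  interpret As: bounded_linear "hadjoint A" by (rule hA(1))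
  interpret Ms: bounded_linear "hadjoint M" by (rule hM(1))
  define B where "B = (\<lambda>x. A x + M x)"
  have blB: "bounded_linear B" unfolding B_def by (intro bounded_linear_add blA blM)
  have hB: "hadjoint B = (\<lambda>y. hadjoint A y + hadjoint M y)"
    by (rule hadjoint_unique) (simp add: B_def inner_add_left inner_add_right hA(2) hM(2))
  have F1: "A (hadjoint M x) = hadjoint M (A x)" for x using F by (metis comp_apply)
  have F2: "M (hadjoint A x) = hadjoint A (M x)" for x
  proof (rule inner_eq_all)
    fix z
    have "inner z (M (hadjoint A x)) = inner (A (hadjoint M z)) x"
      by (metis hA(2) hM(2) inner_commute)
    also have "\<dots> = inner (hadjoint M (A z)) x" by (simp add: F1)
    also have "\<dots> = inner z (hadjoint A (M x))" by (metis hA(2) hM(2) inner_commute)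
    finally show "inner z (M (hadjoint A x)) = inner z (hadjoint A (M x))" .
  qed
  have N1: "hadjoint M (M x) = M (hadjoint M x)" for x using nor by (metis comp_apply)
  have "self_commutator B = self_commutator A"
    unfolding self_commutator_def hB
    by (rule ext) (simp add: B_def As.add Ms.add A.add M.add F1 F2 N1 algebra_simps)
  then show "onorm (self_commutator A) \<le> (onorm (\<lambda>x. A x + M x))\<^sup>2"
    using comm_bound[OF blB] by (simp add: B_def)
qed

end
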